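(* Let $G$ and $H$ be graphs. If $G\in\operatorname{obs}^\ast(H)$, then there is a vertex $v\in V(G)$ such that $G-v\cong H$.
   Context: All graphs are finite, simple and loopless. A full-homomorphism $\varphi\colon G\to H$ is a map $V(G)\to V(H)$ such that for all $x,y\in V(G)$, $xy\in E(G)$ if and only if $\varphi(x)\varphi(y)\in E(H)$. A full $H$-colouring of $G$ is a full-homomorphism $G\to H$. A minimal $H$-obstruction is a graph $G$ that admits no full $H$-colouring while every proper induced subgraph of $G$ admits one; $\operatorname{obs}(H)$ denotes the set of minimal $H$-obstructions (up to isomorphism), and $\operatorname{obs}^\ast(H)$ the set of minimal $H$-obstructions on exactly $|V(H)|+1$ vertices. *)

theory Defs
  imports Main
begin

type_synonym 'a graph = "'a set \<times> ('a \<times> 'a) set"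

definition verts :: "'a graph \<Rightarrow> 'a set" where "verts G = fst G"
definition edges :: "'a graph \<Rightarrow> ('a \<times> 'a) set" where "edges G = snd G"

definition is_graph :: "'a graph \<Rightarrow> bool" where
  "is_graph G \<longleftrightarrow> finite (verts G) \<and> edges G \<subseteq> verts G \<times> verts G
     \<and> sym (edges G) \<and> irrefl (edges G)"

definition full_hom :: "'a graph \<Rightarrow> 'b graph \<Rightarrow> ('a \<Rightarrow> 'b) \<Rightarrow> bool" where
  "full_hom G H f \<longleftrightarrow> f ` verts G \<subseteq> verts H \<and>
     (\<forall>x\<in>verts G. \<forall>y\<in>verts G. (x, y) \<in> edges G \<longleftrightarrow> (f x, f y) \<in> edges H)"

definition full_colourable :: "'a graph \<Rightarrow> 'b graph \<Rightarrow> bool" where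
  "full_colourable G H \<longleftrightarrow> (\<exists>f. full_hom G H f)"

definition induced :: "'a graph \<Rightarrow> 'a set \<Rightarrow> 'a graph" where
  "induced G S = (S, edges G \<inter> (S \<times> S))"

definition delete_vertex :: "'a graph \<Rightarrow> 'a \<Rightarrow> 'a graph" where
  "delete_vertex G v = induced G (verts G - {v})"

definition minimal_obstruction :: "'b graph \<Rightarrow> 'a graph \<Rightarrow> bool" where
  "minimal_obstruction H G \<longleftrightarrow> is_graph G \<and> \<not> full_colourable G H \<and>
     (\<forall>S. S \<subset> verts G \<longrightarrow> full_colourable (induced G S) H)"

definition obs_star :: "'b graph \<Rightarrow> 'a graph \<Rightarrow> bool" where
  "obs_star H G \<longleftrightarrow> minimal_obstruction H G \<and> card (verts G) = card (verts H) + 1"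

definition graph_iso :: "'a graph \<Rightarrow> 'b graph \<Rightarrow> bool" where
  "graph_iso G H \<longleftrightarrow> (\<exists>f. bij_betw f (verts G) (verts H) \<and>
     (\<forall>x\<in>verts G. \<forall>y\<in>verts G. (x, y) \<in> edges G \<longleftrightarrow> (f x, f y) \<in> edges H))"

end

theory Submission
  imports Defs
begin


lemma card_sd: "finite A \<Longrightarrow> finite B \<Longrightarrow> card ((A - B) \<union> (B - A)) + 2 * card (A \<inter> B) = card A + card B"
proof -
  assume f: "finite A" "finite B"
  have "A \<union> B = ((A - B) \<union> (B - A)) \<union> (A \<inter> B)" by blast
  moreover have "card (((A - B) \<union> (B - A)) \<union> (A \<inter> B)) = card ((A - B) \<union> (B - A)) + card (A \<inter> B)"
    by (rule card_Un_disjoint) (use f in auto)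
  ultimately show ?thesis using card_Un_Int[OF f] by simp
qed

lemma odd_sd: "finite A \<Longrightarrow> finite B \<Longrightarrow> odd (card ((A - B) \<union> (B - A))) = (odd (card A) \<noteq> odd (card B))"
  using card_sd[of A B] by (metis even_add even_mult_iff even_numeral)

lemma comb:
  fixes V :: "'a set" and E :: "('a \<times> 'a) set"
  assumes fin: "finite V" and ne: "V \<noteq> {}"
    and h: "\<forall>v\<in>V. \<exists>x\<in>V. \<exists>y\<in>V. \<forall>z\<in>V. (((x,z)\<in>E) = ((y,z)\<in>E)) = (z \<noteq> v)"
  shows False
proof -
  define g where "g A = {z\<in>V. odd (card {x\<in>A. (x,z)\<in>E})}" for A
  have filt: "{x\<in>(A - B) \<union> (B - A). P x} = ({x\<in>A. P x} - {x\<in>B. P x}) \<union> ({x\<in>B. P x} - {x\<in>A. P x})"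
    for A B and P :: "'a \<Rightarrow> bool" by auto
  have glin: "g ((A - B) \<union> (B - A)) = (g A - g B) \<union> (g B - g A)" if "finite A" "finite B" for A B
  proof -
    have "odd (card {x\<in>(A - B) \<union> (B - A). (x,z)\<in>E}) = (odd (card {x\<in>A. (x,z)\<in>E}) \<noteq> odd (card {x\<in>B. (x,z)\<in>E}))" for z
      unfolding filt by (rule odd_sd) (use that in auto)
    then show ?thesis unfolding g_def by blast
  qed
  have claim: "\<exists>A\<subseteq>V. even (card A) \<and> g A = W" if "W \<subseteq> V" for W
  proof -
    have "finite W" using that fin finite_subset by blast
    from this that show ?thesis
    proof (induction W rule: finite_subset_induct)
      case empty
      show ?case by (rule exI[of _ "{}"]) (auto simp: g_def)
    next
      case (insert a W)
      then obtain A where A: "A \<subseteq> V" "even (card A)" "g A = W" by blast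
      obtain x y where xy: "x \<in> V" "y \<in> V" "\<forall>z\<in>V. (((x,z)\<in>E) = ((y,z)\<in>E)) = (z \<noteq> a)"
        using h insert.hyps(2) by blast
      have "x \<noteq> y" using xy insert.hyps(2) by blast
      have fA: "finite A" using A fin finite_subset by blast
      have gB: "g {x, y} = {a}"
      proof -
        have "card {u\<in>{x,y}. (u,z)\<in>E} = (if (x,z)\<in>E then 1 else 0) + (if (y,z)\<in>E then 1 else 0)" for z
        proof -
          have "{u\<in>{x,y}. (u,z)\<in>E} = (if (x,z)\<in>E then {x} else {}) \<union> (if (y,z)\<in>E then {y} else {})"
            by auto
          then show ?thesis using \<open>x \<noteq> y\<close> by auto
        qed
        then show ?thesis using xy insert.hyps(2) unfolding g_def by auto
      qed
      let ?A = "(A - {x,y}) \<union> ({x,y} - A)"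
      have "?A \<subseteq> V" using A xy by auto
      moreover have "even (card ?A)" using odd_sd[OF fA, of "{x,y}"] A \<open>x \<noteq> y\<close> by simp
      moreover have "g ?A = insert a W" using glin[OF fA, of "{x,y}"] gB A insert.hyps by auto
      ultimately show ?case by blast
    qed
  qed
  obtain u where u: "u \<in> V" using ne by blast
  define Ev where "Ev = {A. A \<subseteq> V \<and> even (card A)}"
  have "Pow V \<subseteq> g ` Ev" using claim unfolding Ev_def by blast
  hence "card (Pow V) \<le> card (g ` Ev)" by (intro card_mono) (auto simp: Ev_def fin)
  also have "\<dots> \<le> card Ev" by (rule card_image_le) (auto simp: Ev_def fin)
  also have "\<dots> \<le> card (Pow (V - {u}))"
  proof -
    have "inj_on (\<lambda>A. A - {u}) Ev"
    proof (rule inj_onI)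
      fix A B assume AB: "A \<in> Ev" "B \<in> Ev" "A - {u} = B - {u}"
      have fA: "finite A" "finite B" using AB(1,2) fin finite_subset unfolding Ev_def by auto
      show "A = B"
      proof (rule ccontr)
        assume "A \<noteq> B"
        then have "(u \<in> A \<and> u \<notin> B \<and> A = insert u B) \<or> (u \<in> B \<and> u \<notin> A \<and> B = insert u A)"
          using AB(3) by blast
        then show False using AB(1,2) fA unfolding Ev_def by auto
      qed
    qed
    moreover have "(\<lambda>A. A - {u}) ` Ev \<subseteq> Pow (V - {u})" unfolding Ev_def by auto
    ultimately show ?thesis using card_inj_on_le[of "\<lambda>A. A - {u}" Ev "Pow (V - {u})"] fin by auto
  qed
  finally have "2 ^ card V \<le> (2::nat) ^ card (V - {u})" using fin by (simp add: card_Pow)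
  moreover have "card (V - {u}) < card V" using u fin by (meson card_Diff1_less)
  ultimately show False by (simp add: power_increasing_iff)
qed

lemma no_twins:
  assumes G: "is_graph G" and H: "is_graph H" and mo: "minimal_obstruction H G"
    and xy: "x \<in> verts G" "y \<in> verts G" "x \<noteq> y"
    and tw: "\<forall>z\<in>verts G. ((x,z) \<in> edges G) = ((y,z) \<in> edges G)"
  shows False
proof -
  have "verts G - {x} \<subset> verts G" using xy by auto
  then obtain f where f: "full_hom (induced G (verts G - {x})) H f"
    using mo unfolding minimal_obstruction_def full_colourable_def by blast
  have fi: "f ` (verts G - {x}) \<subseteq> verts H"
    and fe: "\<And>a b. a \<in> verts G - {x} \<Longrightarrow> b \<in> verts G - {x} \<Longrightarrow> (a,b) \<in> edges G \<longleftrightarrow> (f a, f b) \<in> edges H"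
    using f unfolding full_hom_def induced_def verts_def edges_def by auto
  have symG: "sym (edges G)" "irrefl (edges G)" and symH: "sym (edges H)" "irrefl (edges H)"
    using G H unfolding is_graph_def by auto
  define f' where "f' = f(x := f y)"
  have tw': "(z,x) \<in> edges G \<longleftrightarrow> (z,y) \<in> edges G" if "z \<in> verts G" for z
    using tw that symG(1) by (meson symD)
  have "full_hom G H f'"
    unfolding full_hom_def
  proof (intro conjI ballI)
    show "f' ` verts G \<subseteq> verts H" using fi xy unfolding f'_def by auto
  next
    fix a b assume ab: "a \<in> verts G" "b \<in> verts G"
    show "((a, b) \<in> edges G) = ((f' a, f' b) \<in> edges H)"
    proof (cases "a = x")
      case True
      show ?thesis
      proof (cases "b = x")
        case True
        then show ?thesis using \<open>a = x\<close> symG(2) symH(2) unfolding irrefl_def f'_def by auto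
      next
        case False
        then have "(a,b) \<in> edges G \<longleftrightarrow> (y,b) \<in> edges G" using tw ab True by auto
        also have "\<dots> \<longleftrightarrow> (f y, f b) \<in> edges H" using fe[of y b] xy ab False by auto
        finally show ?thesis using True False unfolding f'_def by auto
      qed
    next
      case False
      show ?thesis
      proof (cases "b = x")
        case True
        then have "(a,b) \<in> edges G \<longleftrightarrow> (a,y) \<in> edges G" using tw' ab by auto
        also have "\<dots> \<longleftrightarrow> (f a, f y) \<in> edges H" using fe[of a y] xy ab False by auto
        finally show ?thesis using True False unfolding f'_def by auto
      next
        case False
        then show ?thesis using fe[of a b] ab \<open>a \<noteq> x\<close> unfolding f'_def by auto
      qed
    qed
  qed
  then show False using mo unfolding minimal_obstruction_def full_colourable_def by blast
qed

theorem mainTheorem9: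
  fixes G :: "'a graph" and H :: "'b graph"
  assumes "is_graph G" and "is_graph H"
    and "obs_star H G"
  shows "\<exists>v\<in>verts G. graph_iso (delete_vertex G v) H"
proof (rule ccontr)
  assume nc: "\<not> ?thesis"
  have mo: "minimal_obstruction H G" and cd: "card (verts G) = card (verts H) + 1"
    using assms(3) unfolding obs_star_def by auto
  have finG: "finite (verts G)" and finH: "finite (verts H)"
    using assms(1,2) unfolding is_graph_def by auto
  have ne: "verts G \<noteq> {}" using cd by auto
  have key: "\<forall>v\<in>verts G. \<exists>x\<in>verts G. \<exists>y\<in>verts G. \<forall>z\<in>verts G.
      (((x,z)\<in>edges G) = ((y,z)\<in>edges G)) = (z \<noteq> v)"
  proof
    fix v assume v: "v \<in> verts G"
    have "verts G - {v} \<subset> verts G" using v by auto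
    then obtain f where f: "full_hom (induced G (verts G - {v})) H f"
      using mo unfolding minimal_obstruction_def full_colourable_def by blast
    have fi: "f ` (verts G - {v}) \<subseteq> verts H"
      and fe: "\<And>a b. a \<in> verts G - {v} \<Longrightarrow> b \<in> verts G - {v} \<Longrightarrow> (a,b) \<in> edges G \<longleftrightarrow> (f a, f b) \<in> edges H"
      using f unfolding full_hom_def induced_def verts_def edges_def by auto
    show "\<exists>x\<in>verts G. \<exists>y\<in>verts G. \<forall>z\<in>verts G. (((x,z)\<in>edges G) = ((y,z)\<in>edges G)) = (z \<noteq> v)"
    proof (cases "inj_on f (verts G - {v})")
      case True
      have c1: "card (f ` (verts G - {v})) = card (verts H)"
        using card_image[OF True] cd v finG by simp
      have "f ` (verts G - {v}) = verts H"
        using card_subset_eq[OF finH fi c1] .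
      then have "bij_betw f (verts G - {v}) (verts H)" using True unfolding bij_betw_def by auto
      then have "graph_iso (delete_vertex G v) H"
        unfolding graph_iso_def delete_vertex_def induced_def verts_def edges_def
        using fe unfolding verts_def edges_def by auto
      then show ?thesis using nc v by blast
    next
      case False
      then obtain x y where xy: "x \<in> verts G - {v}" "y \<in> verts G - {v}" "x \<noteq> y" "f x = f y"
        unfolding inj_on_def by blast
      have tw: "((x,z)\<in>edges G) = ((y,z)\<in>edges G)" if "z \<in> verts G - {v}" for z
        using fe[of x z] fe[of y z] xy that by auto
      have "\<not> (\<forall>z\<in>verts G. ((x,z) \<in> edges G) = ((y,z) \<in> edges G))"
        using no_twins[OF assms(1,2) mo, of x y] xy by auto
      then have "((x,v)\<in>edges G) \<noteq> ((y,v)\<in>edges G)" using tw by blast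
      then have "\<forall>z\<in>verts G. (((x,z)\<in>edges G) = ((y,z)\<in>edges G)) = (z \<noteq> v)"
        using tw by blast
      then show ?thesis using xy by blast
    qed
  qed
  show False by (rule comb[OF finG ne key])
qed

end
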